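(* Let $\pi_1,\pi_2\in\mathfrak{S}_m$ and suppose that no $i\in\{1,\dots,m\}$ is fixed by exactly one of $\pi_1,\pi_2$. Then $$d_{trans}(\pi_1,\pi_2)=N(G_{\pi_1},G_{\pi_2}^{-1})-A(G_{\pi_1},G_{\pi_2}^{-1}),$$ where $N(G_{\pi_1},G_{\pi_2}^{-1})$ is the number of non-isolated nodes of the multigraph $G_{\pi_1}+G_{\pi_2}^{-1}$ and $A(G_{\pi_1},G_{\pi_2}^{-1})$ is the number of alternating cycles in $G_{\pi_1}+G_{\pi_2}^{-1}$.
   Context: $\mathfrak{S}_m$ is the symmetric group on $\{1,\dots,m\}$; permutations are composed right to left. For $\pi_1,\pi_2\in\mathfrak{S}_m$, $d_{trans}(\pi_1,\pi_2)$ is the least number of transpositions whose product equals $\pi_2^{-1}\pi_1$ (zero if this is the identity). For $\pi\in\mathfrak{S}_m$, $G_\pi$ is the directed graph on $\{1,\dots,m\}$ with arc set $Q_\pi=\{(i,j): i\ne j,\ \pi(i)=j\}$, and $G_\pi^{-1}$ is the graph with all arcs reversed (arc set $Q_\pi^{-1}$). $G_{\pi_1}+G_{\pi_2}^{-1}$ is the directed multigraph on $\{1,\dots,m\}$ with red arcs $Q_{\pi_1}$ and blue arcs $Q_{\pi_2}^{-1}$ (a red and a blue arc with the same endpoints are distinct arcs). A node is isolated if it is incident to no arc. An alternating cycle is a closed directed trail (no arc repeated) in this multigraph in which consecutive arcs, including the last and the first, have different colors, considered up to cyclic rotation. *)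

theory Defs
  imports "HOL-Combinatorics.Combinatorics"
begin

text \<open>Permutations of {1..m} are functions nat => nat with p permutes {1..m}.
  Composition is right to left: (f o g) x = f (g x).\<close>

text \<open>Product of a list of transpositions (leftmost factor applied last).\<close>
definition trans_prod :: "(nat \<times> nat) list \<Rightarrow> nat \<Rightarrow> nat" where
  "trans_prod ts = foldr (\<lambda>(a, b) f. transpose a b \<circ> f) ts id"

definition d_trans :: "nat \<Rightarrow> (nat \<Rightarrow> nat) \<Rightarrow> (nat \<Rightarrow> nat) \<Rightarrow> nat" where
  "d_trans m p1 p2 = (LEAST n. \<exists>ts. length ts = n \<and>
      (\<forall>(a, b) \<in> set ts. a \<noteq> b \<and> a \<in> {1..m} \<and> b \<in> {1..m}) \<and>
      trans_prod ts = inv p2 \<circ> p1)"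

text \<open>Arcs of the multigraph G_p1 + G_p2^-1: (colour, tail, head);
  colour True = red (arcs of G_p1), False = blue (reversed arcs of G_p2).\<close>
type_synonym arc = "bool \<times> nat \<times> nat"

definition red_arcs :: "nat \<Rightarrow> (nat \<Rightarrow> nat) \<Rightarrow> arc set" where
  "red_arcs m p = {(True, i, p i) | i. i \<in> {1..m} \<and> p i \<noteq> i}"

definition blue_arcs :: "nat \<Rightarrow> (nat \<Rightarrow> nat) \<Rightarrow> arc set" where
  "blue_arcs m p = {(False, p i, i) | i. i \<in> {1..m} \<and> p i \<noteq> i}"

definition arcs :: "nat \<Rightarrow> (nat \<Rightarrow> nat) \<Rightarrow> (nat \<Rightarrow> nat) \<Rightarrow> arc set" where
  "arcs m p1 p2 = red_arcs m p1 \<union> blue_arcs m p2"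

definition arc_col :: "arc \<Rightarrow> bool" where "arc_col e = fst e"
definition arc_tail :: "arc \<Rightarrow> nat" where "arc_tail e = fst (snd e)"
definition arc_head :: "arc \<Rightarrow> nat" where "arc_head e = snd (snd e)"

definition N_nodes :: "nat \<Rightarrow> (nat \<Rightarrow> nat) \<Rightarrow> (nat \<Rightarrow> nat) \<Rightarrow> nat" where
  "N_nodes m p1 p2 = card {i \<in> {1..m}. \<exists>e \<in> arcs m p1 p2. arc_tail e = i \<or> arc_head e = i}"

text \<open>A closed alternating trail, as a list of arcs (not up to rotation): nonempty,
  no arc repeated, consecutive arcs (cyclically) join head-to-tail and have different colours.\<close>
definition alt_closed_trail :: "nat \<Rightarrow> (nat \<Rightarrow> nat) \<Rightarrow> (nat \<Rightarrow> nat) \<Rightarrow> arc list \<Rightarrow> bool" where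
  "alt_closed_trail m p1 p2 c \<longleftrightarrow> c \<noteq> [] \<and> distinct c \<and> set c \<subseteq> arcs m p1 p2 \<and>
     (\<forall>k < length c. arc_head (c ! k) = arc_tail (c ! ((k + 1) mod length c)) \<and>
                     arc_col (c ! k) \<noteq> arc_col (c ! ((k + 1) mod length c)))"

definition alt_cycles :: "nat \<Rightarrow> (nat \<Rightarrow> nat) \<Rightarrow> (nat \<Rightarrow> nat) \<Rightarrow> arc list set set" where
  "alt_cycles m p1 p2 = (\<lambda>c. {rotate k c | k. True}) ` {c. alt_closed_trail m p1 p2 c}"

definition A_cycles :: "nat \<Rightarrow> (nat \<Rightarrow> nat) \<Rightarrow> (nat \<Rightarrow> nat) \<Rightarrow> nat" where
  "A_cycles m p1 p2 = card (alt_cycles m p1 p2)"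

end

theory Submission
  imports Defs
begin


lemma perm_orbit_eq:
  assumes "permutation f"
  shows "orbit f x = orbit f y \<longleftrightarrow> y \<in> orbit f x"
  by (metis assms cyclic_on_orbit' orbit_cyclic_eq3 permutation_self_in_orbit)

lemma orbit_sub:
  assumes "\<And>y. y \<in> X \<Longrightarrow> f y \<in> X" "x \<in> X"
  shows "orbit f x \<subseteq> X"
proof
  fix y assume "y \<in> orbit f x" then show "y \<in> X"
    by induct (auto intro: assms)
qed

lemma card_img_le:
  assumes "finite A" "\<And>x y. x \<in> A \<Longrightarrow> y \<in> A \<Longrightarrow> F x = F y \<Longrightarrow> G x = G y"
  shows "card (G ` A) \<le> card (F ` A)"
proof -
  define h where "h Q = G (SOME x. x \<in> A \<and> F x = Q)" for Q
  have eq: "G ` A = h ` (F ` A)"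
  proof (intro set_eqI iffI)
    fix z assume "z \<in> G ` A"
    then obtain x where x: "x \<in> A" "z = G x" by auto
    have "(SOME y. y \<in> A \<and> F y = F x) \<in> A \<and> F (SOME y. y \<in> A \<and> F y = F x) = F x"
      by (rule someI[of _ x]) (use x in auto)
    then have "h (F x) = z" using assms(2) x unfolding h_def by metis
    then show "z \<in> h ` (F ` A)" using x by (metis imageI)
  next
    fix z assume "z \<in> h ` (F ` A)"
    then obtain x where x: "x \<in> A" "z = h (F x)" by auto
    have "(SOME y. y \<in> A \<and> F y = F x) \<in> A \<and> F (SOME y. y \<in> A \<and> F y = F x) = F x"
      by (rule someI[of _ x]) (use x in auto)
    then show "z \<in> G ` A" using x unfolding h_def by auto
  qed
  show ?thesis unfolding eq by (rule card_image_le) (use assms(1) in simp)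
qed

lemma card_img_eq:
  assumes "finite A" "\<And>x y. x \<in> A \<Longrightarrow> y \<in> A \<Longrightarrow> F x = F y \<longleftrightarrow> G x = G y"
  shows "card (G ` A) = card (F ` A)"
  using card_img_le[of A F G] card_img_le[of A G F] assms by (meson le_antisym)

lemma transpose_comp_permutes:
  assumes "g permutes U" "a \<in> U" "b \<in> U"
  shows "(transpose a b \<circ> g) permutes U"
  by (simp add: assms permutes_compose permutes_swap_id)

lemma merge_reach:
  assumes "g permutes U" "finite U" "a \<in> U" "b \<in> U" "b \<notin> orbit g a"
  shows "b \<in> orbit (transpose a b \<circ> g) a"
proof -
  define h where "h = transpose a b \<circ> g"
  have pg: "permutation g" by (meson assms(1,2) permutation_permutes)
  have ph: "permutation h" unfolding h_def
    by (meson assms(2) transpose_comp_permutes[OF assms(1,3,4)] permutation_permutes)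
  have aa: "a \<in> orbit g a" by (rule permutation_self_in_orbit[OF pg])
  define n where "n = funpow_dist1 g a a"
  have gn: "(g ^^ n) a = a" unfolding n_def using funpow_dist1_prop[OF aa] .
  have npos: "0 < n" unfolding n_def by simp
  have less: "\<And>k. 0 < k \<Longrightarrow> k < n \<Longrightarrow> (g ^^ k) a \<noteq> a"
    unfolding n_def by (rule funpow_dist1_least)
  have gk_in: "\<And>k. (g ^^ k) a \<in> orbit g a" by (rule funpow_in_orbit[OF aa])
  have hk: "k < n \<Longrightarrow> (h ^^ k) a = (g ^^ k) a" for k
  proof (induction k)
    case 0 then show ?case by simp
  next
    case (Suc k)
    then have "(h ^^ k) a = (g ^^ k) a" by simp
    then have "(h ^^ Suc k) a = transpose a b ((g ^^ Suc k) a)" by (simp add: h_def)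
    also have "\<dots> = (g ^^ Suc k) a"
    proof -
      have ne1: "(g ^^ Suc k) a \<noteq> a" using less[of "Suc k"] Suc.prems by blast
      have ne2: "(g ^^ Suc k) a \<noteq> b" using gk_in[of "Suc k"] assms(5) by blast
      show ?thesis using ne1 ne2 by (simp add: transpose_apply_other)
    qed
    finally show ?case .
  qed
  obtain k where k: "n = Suc k" using npos gr0_implies_Suc by blast
  have "(h ^^ n) a = h ((h ^^ k) a)" using k by simp
  also have "\<dots> = h ((g ^^ k) a)" using hk[of k] k by simp
  also have "\<dots> = transpose a b (g ((g ^^ k) a))" by (simp add: h_def)
  also have "g ((g ^^ k) a) = (g ^^ n) a" using k by simp
  also have "transpose a b ((g ^^ n) a) = b" using gn by simp
  finally have hn: "(h ^^ n) a = b" .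
  have "b \<in> {(h ^^ j) a | j. True}" using hn by blast
  then show ?thesis unfolding h_def[symmetric] using orbit_altdef_permutation[OF ph] by simp
qed

lemma merge_count:
  assumes "g permutes U" "finite U" "a \<in> U" "b \<in> U" "b \<notin> orbit g a"
  shows "card (orbit (transpose a b \<circ> g) ` U) + 1 = card (orbit g ` U)"
proof -
  define h where "h = transpose a b \<circ> g"
  have pg: "permutation g" by (meson assms(1,2) permutation_permutes)
  have hp: "h permutes U" unfolding h_def by (rule transpose_comp_permutes[OF assms(1,3,4)])
  have ph: "permutation h" by (meson hp assms(2) permutation_permutes)
  have self_g: "\<And>x. x \<in> orbit g x" using pg permutation_self_in_orbit by metis
  have self_h: "\<And>x. x \<in> orbit h x" using ph permutation_self_in_orbit by metis
  have ab: "a \<noteq> b" using assms(5) self_g by metis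
  define Oa where "Oa = orbit g a"
  define Ob where "Ob = orbit g b"
  define W where "W = Oa \<union> Ob"
  have bh: "b \<in> orbit h a" unfolding h_def by (rule merge_reach[OF assms])
  have disj: "Oa \<inter> Ob = {}"
  proof (rule ccontr)
    assume "Oa \<inter> Ob \<noteq> {}"
    then obtain z where z: "z \<in> orbit g a" "z \<in> orbit g b" unfolding Oa_def Ob_def by blast
    have "orbit g a = orbit g z" using z(1) perm_orbit_eq[OF pg] by blast
    also have "\<dots> = orbit g b" using z(2) perm_orbit_eq[OF pg] by blast
    finally show False using assms(5) self_g[of b] by blast
  qed
  have gW: "g y \<in> W" if "y \<in> W" for y
    using that unfolding W_def Oa_def Ob_def by (auto intro: orbit.step)
  have aW: "a \<in> W" "b \<in> W" unfolding W_def Oa_def Ob_def using self_g by auto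
  have hW: "h y \<in> W" if "y \<in> W" for y
    using gW[OF that] aW unfolding h_def
    by (cases "g y = a"; cases "g y = b") auto
  have O1: "orbit h a \<subseteq> W" by (rule orbit_sub[of W h a]) (use hW aW in auto)
  have ginv: "g y = transpose a b (h y)" for y unfolding h_def by simp
  have gO: "g y \<in> orbit h a" if "y \<in> orbit h a" for y
  proof -
    have "h y \<in> orbit h a" using that by (rule orbit.step)
    then show ?thesis using ginv[of y] self_h[of a] bh
      by (cases "h y = a"; cases "h y = b") auto
  qed
  have bb: "orbit h b = orbit h a" using bh perm_orbit_eq[OF ph] by metis
  have O2a: "orbit g a \<subseteq> orbit h a" by (rule orbit_sub[of "orbit h a" g a]) (use gO self_h in auto)
  have O2b: "orbit g b \<subseteq> orbit h a" by (rule orbit_sub[of "orbit h a" g b]) (use gO bh in auto)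
  have O2: "W \<subseteq> orbit h a"
    unfolding W_def Oa_def Ob_def using O2a O2b by blast
  have OW: "orbit h a = W" using O1 O2 by blast
  have WU: "W \<subseteq> U" unfolding W_def Oa_def Ob_def
    using permutes_orbit_subset[OF assms(1,3)] permutes_orbit_subset[OF assms(1,4)] by blast
  have out: "orbit h x = orbit g x" if "x \<in> U - W" for x
  proof -
    have dj: "orbit g x \<inter> W = {}"
    proof (rule ccontr)
      assume "orbit g x \<inter> W \<noteq> {}"
      then obtain z where z: "z \<in> orbit g x" "z \<in> Oa \<or> z \<in> Ob" unfolding W_def by auto
      then have "orbit g x = Oa \<or> orbit g x = Ob" unfolding Oa_def Ob_def
        using perm_orbit_eq[OF pg] by blast
      then show False using that self_g[of x] unfolding W_def by auto
    qed
    have c1: "h y \<in> orbit g x" if "y \<in> orbit g x" for y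
    proof -
      have "g y \<in> orbit g x" using that by (rule orbit.step)
      then show ?thesis using dj aW unfolding h_def by (metis comp_apply disjoint_iff transpose_apply_other)
    qed
    have s1: "orbit h x \<subseteq> orbit g x" using orbit_sub[of "orbit g x" h x] c1 self_g by blast
    have c2: "g y \<in> orbit h x" if "y \<in> orbit h x" for y
    proof -
      have "g y \<in> orbit g x" using that s1 by (blast intro: orbit.step)
      then have "g y = h y" using dj aW unfolding h_def by (metis comp_apply disjoint_iff transpose_apply_other)
      then show ?thesis using that by (metis orbit.step)
    qed
    have s2: "orbit g x \<subseteq> orbit h x" using orbit_sub[of "orbit h x" g x] c2 self_h by blast
    show ?thesis using s1 s2 by blast
  qed
  have inW: "orbit h x = W" if "x \<in> W" for x
    using that OW perm_orbit_eq[OF ph] by metis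
  have U_split: "U = W \<union> (U - W)" using WU by blast
  have imgh: "orbit h ` U = insert W (orbit g ` (U - W))"
  proof -
    have "orbit h ` U = orbit h ` W \<union> orbit h ` (U - W)" using U_split by (metis image_Un)
    also have "orbit h ` W = {W}" using inW aW by auto
    also have "orbit h ` (U - W) = orbit g ` (U - W)" using out by auto
    finally show ?thesis by simp
  qed
  have imgg: "orbit g ` U = insert Oa (insert Ob (orbit g ` (U - W)))"
  proof -
    have "orbit g ` U = orbit g ` W \<union> orbit g ` (U - W)" using U_split by (metis image_Un)
    also have "orbit g ` W = {Oa, Ob}"
    proof -
      have "orbit g x = Oa" if "x \<in> Oa" for x using that perm_orbit_eq[OF pg] unfolding Oa_def by metis
      moreover have "orbit g x = Ob" if "x \<in> Ob" for x using that perm_orbit_eq[OF pg] unfolding Ob_def by metis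
      ultimately show ?thesis unfolding W_def Oa_def Ob_def using self_g by blast
    qed
    finally show ?thesis by simp
  qed
  have nW: "W \<notin> orbit g ` (U - W)" "Oa \<notin> orbit g ` (U - W)" "Ob \<notin> orbit g ` (U - W)"
    using self_g unfolding W_def by blast+
  have "Oa \<noteq> Ob" using disj self_g unfolding Oa_def Ob_def by blast
  moreover have fin: "finite (orbit g ` (U - W))" using assms(2) by simp
  ultimately show ?thesis unfolding h_def[symmetric] imgh imgg
    using nW by (simp add: card_insert_disjoint)
qed

lemma split_count:
  assumes "g permutes U" "finite U" "a \<in> U" "b \<in> U" "b \<in> orbit g a"
  shows "card (orbit g ` U) \<le> card (orbit (transpose a b \<circ> g) ` U)"
proof -
  define h where "h = transpose a b \<circ> g"
  have pg: "permutation g" by (meson assms(1,2) permutation_permutes)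
  have hp: "h permutes U" unfolding h_def by (rule transpose_comp_permutes[OF assms(1,3,4)])
  have ph: "permutation h" by (meson hp assms(2) permutation_permutes)
  have self_g: "\<And>x. x \<in> orbit g x" using pg permutation_self_in_orbit by metis
  have sub: "orbit h x \<subseteq> orbit g x" for x
  proof (rule orbit_sub)
    show "x \<in> orbit g x" by (rule self_g)
    fix y assume y: "y \<in> orbit g x"
    have gy: "g y \<in> orbit g x" using y by (rule orbit.step)
    show "h y \<in> orbit g x"
    proof (cases "g y = a \<or> g y = b")
      case True
      then have "g y \<in> orbit g a" using assms(5) perm_orbit_eq[OF pg] self_g by blast
      then have "orbit g x = orbit g a" using gy perm_orbit_eq[OF pg] by blast
      then have "a \<in> orbit g x" "b \<in> orbit g x" using self_g assms(5) by auto
      then show ?thesis unfolding h_def using True by auto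
    next
      case False then show ?thesis unfolding h_def using gy by auto
    qed
  qed
  show ?thesis unfolding h_def[symmetric]
  proof (rule card_img_le[OF assms(2)])
    fix x y assume "x \<in> U" "y \<in> U" "orbit h x = orbit h y"
    then have "x \<in> orbit h y" using permutation_self_in_orbit[OF ph, of x] by simp
    then have "x \<in> orbit g y" using sub by blast
    then show "orbit g x = orbit g y" using perm_orbit_eq[OF pg] by blast
  qed
qed

lemma step_count:
  assumes "g permutes U" "finite U" "a \<in> U" "b \<in> U"
  shows "card (orbit g ` U) \<le> card (orbit (transpose a b \<circ> g) ` U) + 1"
  using merge_count[OF assms] split_count[OF assms] by (cases "b \<in> orbit g a") auto


lemma trans_prod_Nil[simp]: "trans_prod [] = id"
  by (simp add: trans_prod_def)

lemma trans_prod_Cons[simp]: "trans_prod ((a, b) # ts) = transpose a b \<circ> trans_prod ts"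
  by (simp add: trans_prod_def)

definition valid_ts :: "nat set \<Rightarrow> (nat \<times> nat) list \<Rightarrow> bool" where
  "valid_ts U ts \<longleftrightarrow> (\<forall>(a, b) \<in> set ts. a \<noteq> b \<and> a \<in> U \<and> b \<in> U)"

lemma card_orbit_id: "card (orbit id ` U) = card U"
proof -
  have "orbit id x = {x}" for x :: 'a using orbit_eq_singleton_iff[of id x] by simp
  then have "orbit id ` U = (\<lambda>x. {x}) ` U" by auto
  then show ?thesis by (simp add: card_image)
qed

lemma lower_bound:
  assumes "finite U" "valid_ts U ts"
  shows "trans_prod ts permutes U \<and> card U \<le> card (orbit (trans_prod ts) ` U) + length ts"
  using assms(2)
proof (induction ts)
  case Nil
  have "trans_prod [] permutes U" using permutes_id[of U] by simp
  moreover have "card U \<le> card (orbit (trans_prod []) ` U) + length []"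
    by (simp only: trans_prod_Nil card_orbit_id list.size)
  ultimately show ?case by blast
next
  case (Cons p ts)
  obtain a b where p: "p = (a, b)" by (cases p)
  have v: "valid_ts U ts" "a \<in> U" "b \<in> U" using Cons.prems p unfolding valid_ts_def by auto
  have IH: "trans_prod ts permutes U" "card U \<le> card (orbit (trans_prod ts) ` U) + length ts"
    using Cons.IH v(1) by auto
  have "trans_prod (p # ts) permutes U" using transpose_comp_permutes[OF IH(1) v(2,3)] p by simp
  moreover have "card (orbit (trans_prod ts) ` U) \<le> card (orbit (trans_prod (p # ts)) ` U) + 1"
    using step_count[OF IH(1) assms(1) v(2,3)] p by simp
  ultimately show ?case using IH(2) by simp
qed

lemma upper_bound:
  assumes "finite U" "f permutes U"
  shows "\<exists>ts. valid_ts U ts \<and> length ts = card U - card (orbit f ` U) \<and> trans_prod ts = f"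
  using assms(2)
proof (induction "card U - card (orbit f ` U)" arbitrary: f rule: less_induct)
  case less
  show ?case
  proof (cases "f = id")
    case True
    then show ?thesis using card_orbit_id[of U] by (auto simp: valid_ts_def intro: exI[of _ "[]"])
  next
    case False
    then obtain x where x: "f x \<noteq> x" by (auto simp: fun_eq_iff)
    then have xU: "x \<in> U" using less.prems by (meson permutes_not_in)
    have fxU: "f x \<in> U" using less.prems xU by (simp add: permutes_in_image)
    define g where "g = transpose x (f x) \<circ> f"
    have gp: "g permutes U" unfolding g_def by (rule transpose_comp_permutes[OF less.prems xU fxU])
    have gx: "g x = x" unfolding g_def by simp
    have "orbit g x = {x}" using gx orbit_eq_singleton_iff by metis
    then have nin: "f x \<notin> orbit g x" using x by auto
    have fg: "f = transpose x (f x) \<circ> g" unfolding g_def by (auto simp: fun_eq_iff)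
    have cnt: "card (orbit f ` U) + 1 = card (orbit g ` U)"
      using merge_count[OF gp assms(1) xU fxU nin] fg by simp
    have le: "card (orbit g ` U) \<le> card U" using assms(1) card_image_le by blast
    have lt: "card U - card (orbit g ` U) < card U - card (orbit f ` U)" using cnt le by linarith
    obtain ts where ts: "valid_ts U ts" "length ts = card U - card (orbit g ` U)" "trans_prod ts = g"
      using less.hyps[OF lt gp] by blast
    show ?thesis
    proof (intro exI conjI)
      show "valid_ts U ((x, f x) # ts)" using ts(1) x xU fxU unfolding valid_ts_def by auto
      show "length ((x, f x) # ts) = card U - card (orbit f ` U)" using ts(2) cnt le by simp
      show "trans_prod ((x, f x) # ts) = f" using ts(3) fg by simp
    qed
  qed
qed

lemma least_trans:
  assumes "finite U" "f permutes U"
  shows "(LEAST n. \<exists>ts. length ts = n \<and> (\<forall>(a, b) \<in> set ts. a \<noteq> b \<and> a \<in> U \<and> b \<in> U) \<and>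
      trans_prod ts = f) = card U - card (orbit f ` U)"
proof (rule Least_equality)
  show "\<exists>ts. length ts = card U - card (orbit f ` U) \<and> (\<forall>(a, b) \<in> set ts. a \<noteq> b \<and> a \<in> U \<and> b \<in> U) \<and>
      trans_prod ts = f"
    using upper_bound[OF assms] unfolding valid_ts_def by blast
next
  fix n assume "\<exists>ts. length ts = n \<and> (\<forall>(a, b) \<in> set ts. a \<noteq> b \<and> a \<in> U \<and> b \<in> U) \<and> trans_prod ts = f"
  then obtain ts where ts: "length ts = n" "valid_ts U ts" "trans_prod ts = f" unfolding valid_ts_def by blast
  have "card U \<le> card (orbit f ` U) + n" using lower_bound[OF assms(1) ts(2)] ts by simp
  then show "card U - card (orbit f ` U) \<le> n" by arith
qed



definition ftrail :: "('a \<Rightarrow> 'a) \<Rightarrow> 'a set \<Rightarrow> 'a list \<Rightarrow> bool" where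
  "ftrail f E c \<longleftrightarrow> c \<noteq> [] \<and> distinct c \<and> set c \<subseteq> E \<and>
     (\<forall>k < length c. c ! ((k + 1) mod length c) = f (c ! k))"

lemma card_img_le':
  assumes "finite (F ` A)" "\<And>x y. x \<in> A \<Longrightarrow> y \<in> A \<Longrightarrow> F x = F y \<Longrightarrow> G x = G y"
  shows "card (G ` A) \<le> card (F ` A)"
proof -
  define h where "h Q = G (SOME x. x \<in> A \<and> F x = Q)" for Q
  have eq: "G ` A = h ` (F ` A)"
  proof (intro set_eqI iffI)
    fix z assume "z \<in> G ` A"
    then obtain x where x: "x \<in> A" "z = G x" by auto
    have "(SOME y. y \<in> A \<and> F y = F x) \<in> A \<and> F (SOME y. y \<in> A \<and> F y = F x) = F x"
      by (rule someI[of _ x]) (use x in auto)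
    then have "h (F x) = z" using assms(2) x unfolding h_def by metis
    then show "z \<in> h ` (F ` A)" using x by (metis imageI)
  next
    fix z assume "z \<in> h ` (F ` A)"
    then obtain x where x: "x \<in> A" "z = h (F x)" by auto
    have "(SOME y. y \<in> A \<and> F y = F x) \<in> A \<and> F (SOME y. y \<in> A \<and> F y = F x) = F x"
      by (rule someI[of _ x]) (use x in auto)
    then show "z \<in> G ` A" using x unfolding h_def by auto
  qed
  show ?thesis unfolding eq by (rule card_image_le) (use assms(1) in simp)
qed

lemma card_img_eq':
  assumes "finite (F ` A)" "finite (G ` A)"
    "\<And>x y. x \<in> A \<Longrightarrow> y \<in> A \<Longrightarrow> F x = F y \<longleftrightarrow> G x = G y"
  shows "card (G ` A) = card (F ` A)"
proof -
  have "card (G ` A) \<le> card (F ` A)" by (rule card_img_le') (use assms in auto)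
  moreover have "card (F ` A) \<le> card (G ` A)" by (rule card_img_le') (use assms in auto)
  ultimately show ?thesis by simp
qed

context
  fixes f :: "'a \<Rightarrow> 'a" and E :: "'a set"
  assumes fp: "f permutes E" and finE: "finite E"
begin

lemma permf: "permutation f" using fp finE permutation_permutes by blast

lemma ft_nth:
  assumes "ftrail f E c" "k < length c"
  shows "c ! k = (f ^^ k) (c ! 0)"
  using assms(2)
proof (induction k)
  case 0 then show ?case by simp
next
  case (Suc k)
  have all: "\<forall>k<length c. c ! ((k + 1) mod length c) = f (c ! k)" using assms(1) unfolding ftrail_def by blast
  have "c ! ((k + 1) mod length c) = f (c ! k)" using all Suc_lessD[OF Suc.prems] by blast
  moreover have "(k + 1) mod length c = Suc k" using Suc.prems by simp
  ultimately show ?case using Suc by simp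
qed

lemma ft_period:
  assumes "ftrail f E c"
  shows "(f ^^ length c) (c ! 0) = c ! 0"
proof -
  obtain j where j: "length c = Suc j" using assms unfolding ftrail_def by (cases c) auto
  have "c ! ((j + 1) mod length c) = f (c ! j)" using assms j unfolding ftrail_def by auto
  then have "c ! 0 = f (c ! j)" using j by simp
  also have "\<dots> = f ((f ^^ j) (c ! 0))" using ft_nth[OF assms, of j] j by simp
  finally show ?thesis using j by simp
qed

lemma ft_unique_aux:
  assumes "ftrail f E c" "ftrail f E d" "c ! 0 = d ! 0"
  shows "\<not> length c < length d"
proof
  assume lt: "length c < length d"
  have "d ! length c = (f ^^ length c) (d ! 0)" using ft_nth[OF assms(2) lt] .
  also have "\<dots> = d ! 0" using ft_period[OF assms(1)] assms(3) by simp
  finally have "d ! length c = d ! 0" .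
  moreover have "distinct d" "length c \<noteq> 0" using assms unfolding ftrail_def by auto
  ultimately show False using lt nth_eq_iff_index_eq by fastforce
qed

lemma ft_unique:
  assumes "ftrail f E c" "ftrail f E d" "c ! 0 = d ! 0"
  shows "c = d"
proof -
  have "length c = length d" using ft_unique_aux[OF assms] ft_unique_aux[OF assms(2,1) assms(3)[symmetric]]
    by simp
  then show ?thesis
    using ft_nth[OF assms(1)] ft_nth[OF assms(2)] assms(3) by (simp add: nth_equalityI)
qed

lemma ft_rotate:
  assumes "ftrail f E c"
  shows "ftrail f E (rotate j c)"
proof -
  define L where "L = length c"
  have L: "0 < L" using assms unfolding ftrail_def L_def by auto
  have step: "\<forall>k < L. c ! ((k + 1) mod L) = f (c ! k)" using assms unfolding ftrail_def L_def by auto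
  have "rotate j c ! ((k + 1) mod L) = f (rotate j c ! k)" if k: "k < L" for k
  proof -
    have "rotate j c ! ((k + 1) mod L) = c ! ((j + (k + 1) mod L) mod L)"
      using nth_rotate[of "(k + 1) mod L" c j] L unfolding L_def by simp
    also have "(j + (k + 1) mod L) mod L = ((j + k) mod L + 1) mod L"
    proof -
      have a1: "(j + (k + 1) mod L) mod L = (j + (k + 1)) mod L" by (rule mod_add_right_eq)
      have a2: "((j + k) mod L + 1) mod L = (j + k + 1) mod L" by (rule mod_add_left_eq)
      show ?thesis unfolding a1 a2 by (simp add: add.assoc)
    qed
    also have "c ! \<dots> = f (c ! ((j + k) mod L))" using step L by simp
    also have "c ! ((j + k) mod L) = rotate j c ! k" using nth_rotate[of k c j] k unfolding L_def by simp
    finally show ?thesis .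
  qed
  then show ?thesis using assms unfolding ftrail_def L_def by simp
qed

lemma ft_rotate0:
  assumes "ftrail f E c"
  shows "rotate j c ! 0 = (f ^^ j) (c ! 0)"
proof -
  have L: "0 < length c" using assms unfolding ftrail_def by auto
  have "rotate j c ! 0 = c ! (j mod length c)" using nth_rotate[of 0 c j] L by simp
  also have "\<dots> = (f ^^ (j mod length c)) (c ! 0)" using ft_nth[OF assms, of "j mod length c"] L by simp
  also have "\<dots> = (f ^^ j) (c ! 0)" using funpow_mod_eq[OF ft_period[OF assms]] .
  finally show ?thesis .
qed

lemma ft_exists:
  assumes "e \<in> E"
  shows "\<exists>c. ftrail f E c \<and> c ! 0 = e"
proof -
  have ee: "e \<in> orbit f e" using permutation_self_in_orbit[OF permf] .
  define n where "n = funpow_dist1 f e e"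
  have fn: "(f ^^ n) e = e" unfolding n_def using funpow_dist1_prop[OF ee] .
  have n0: "0 < n" unfolding n_def by simp
  define c where "c = map (\<lambda>k. (f ^^ k) e) [0..<n]"
  have lc: "length c = n" unfolding c_def by simp
  have cn: "k < n \<Longrightarrow> c ! k = (f ^^ k) e" for k unfolding c_def by simp
  have inj: "inj_on (\<lambda>k. (f ^^ k) e) {0..<n}" unfolding n_def by (rule inj_on_funpow_dist1[OF ee])
  have "distinct c" unfolding c_def distinct_map set_upt using inj by simp
  moreover have "set c \<subseteq> E" unfolding c_def
    using funpow_in_orbit[OF ee] permutes_orbit_subset[OF fp assms] by auto
  moreover have "c \<noteq> []" using lc n0 by auto
  moreover have "c ! ((k + 1) mod n) = f (c ! k)" if k: "k < n" for k
  proof (cases "k + 1 < n")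
    case True then show ?thesis using cn k by simp
  next
    case False
    then have "k + 1 = n" using k by simp
    then have "c ! ((k + 1) mod n) = e" using cn n0 by simp
    also have "e = f ((f ^^ k) e)"
    proof -
      have "(f ^^ Suc k) e = f ((f ^^ k) e)" by simp
      moreover have "n = Suc k" using \<open>k + 1 = n\<close> by simp
      ultimately show ?thesis using fn by simp
    qed
    finally show ?thesis using cn k by simp
  qed
  ultimately have "ftrail f E c" unfolding ftrail_def lc by simp
  moreover have "c ! 0 = e" using cn n0 by simp
  ultimately show ?thesis by blast
qed

lemma rot_class_rotate:
  assumes "c \<noteq> []"
  shows "{rotate k (rotate j c) | k. True} = {rotate k c | k. True}"
proof (intro set_eqI iffI)
  fix x assume "x \<in> {rotate k (rotate j c) | k. True}"
  then show "x \<in> {rotate k c | k. True}" by (auto simp: rotate_rotate)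
next
  fix x assume "x \<in> {rotate k c | k. True}"
  then obtain k where x: "x = rotate k c" by auto
  define L where "L = length c"
  have L: "0 < L" using assms unfolding L_def by simp
  obtain l where l: "L = Suc l" using L by (cases L) auto
  have e: "(k + l * j) + j = k + L * j" using l by (simp add: algebra_simps)
  have "rotate (k + l * j) (rotate j c) = rotate (k + L * j) c"
    by (simp only: rotate_rotate e)
  also have "\<dots> = rotate k c"
  proof -
    have m: "(k + L * j) mod length c = k mod length c" by (simp add: L_def)
    show ?thesis using rotate_conv_mod[of "k + L * j" c] rotate_conv_mod[of k c] m by simp
  qed
  finally have "x = rotate (k + l * j) (rotate j c)" using x by simp
  then show "x \<in> {rotate k (rotate j c) | k. True}" by blast
qed

lemma rot_count:
  "card ((\<lambda>c. {rotate k c | k. True}) ` {c. ftrail f E c}) = card (orbit f ` E)"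
proof -
  define T where "T = {c. ftrail f E c}"
  define R where "R c = {rotate k c | k. True}" for c :: "'a list"
  define G where "G c = orbit f (c ! 0)" for c :: "'a list"
  have GT: "G ` T = orbit f ` E"
  proof (intro set_eqI iffI)
    fix x assume "x \<in> G ` T"
    then obtain c where c: "ftrail f E c" "x = orbit f (c ! 0)" unfolding T_def G_def by auto
    have "c ! 0 \<in> E" using c(1) unfolding ftrail_def by (meson nth_mem length_greater_0_conv subsetD)
    then show "x \<in> orbit f ` E" using c by blast
  next
    fix x assume "x \<in> orbit f ` E"
    then obtain e where e: "e \<in> E" "x = orbit f e" by auto
    obtain c where "ftrail f E c" "c ! 0 = e" using ft_exists[OF e(1)] by blast
    then show "x \<in> G ` T" unfolding T_def G_def using e by force
  qed
  have finG: "finite (G ` T)" unfolding GT using finE by simp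
  have iff: "R c = R d \<longleftrightarrow> G c = G d" if c: "c \<in> T" and d: "d \<in> T" for c d
  proof
    assume "R c = R d"
    moreover have "d \<in> R d"
    proof -
      have "d = rotate 0 d" by simp
      then show ?thesis unfolding R_def by blast
    qed
    ultimately have "d \<in> R c" by simp
    then obtain k where k: "d = rotate k c" unfolding R_def by auto
    have "d ! 0 = (f ^^ k) (c ! 0)" using ft_rotate0 c k unfolding T_def by simp
    then have "d ! 0 \<in> orbit f (c ! 0)" using orbit_altdef_permutation[OF permf] by blast
    then show "G c = G d" unfolding G_def using perm_orbit_eq[OF permf] by blast
  next
    assume "G c = G d"
    then have "d ! 0 \<in> orbit f (c ! 0)" unfolding G_def using perm_orbit_eq[OF permf] by blast
    then obtain j where j: "d ! 0 = (f ^^ j) (c ! 0)" using orbit_altdef_permutation[OF permf] by blast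
    have ct: "ftrail f E c" "ftrail f E d" using c d unfolding T_def by auto
    have "rotate j c = d"
      by (rule ft_unique[OF ft_rotate[OF ct(1)] ct(2)]) (use ft_rotate0[OF ct(1)] j in simp)
    moreover have "c \<noteq> []" using ct(1) unfolding ftrail_def by simp
    ultimately show "R c = R d" unfolding R_def using rot_class_rotate[of c j] by simp
  qed
  have finR: "finite (R ` T)"
  proof -
    have "R ` T \<subseteq> Pow {c. set c \<subseteq> E \<and> length c \<le> card E}"
    proof
      fix X assume "X \<in> R ` T"
      then obtain c where c: "ftrail f E c" "X = R c" unfolding T_def by auto
      have "length c \<le> card E" using c(1) unfolding ftrail_def
        by (metis distinct_card card_mono finE)
      then show "X \<in> Pow {c. set c \<subseteq> E \<and> length c \<le> card E}"
        using c unfolding R_def ftrail_def by auto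
    qed
    moreover have "finite {c. set c \<subseteq> E \<and> length c \<le> card E}"
      using finite_lists_length_le[OF finE] by simp
    ultimately show ?thesis by (meson finite_Pow_iff finite_subset)
  qed
  have "card (R ` T) = card (G ` T)"
    by (rule card_img_eq'[OF finG finR]) (use iff in auto)
  also have "G ` T = orbit f ` E" by (rule GT)
  finally show ?thesis unfolding R_def T_def .
qed

end



definition Sset :: "nat \<Rightarrow> (nat \<Rightarrow> nat) \<Rightarrow> nat set" where
  "Sset m p = {i \<in> {1..m}. p i \<noteq> i}"
definition redA :: "(nat \<Rightarrow> nat) \<Rightarrow> nat \<Rightarrow> arc" where "redA p i = (True, i, p i)"
definition bluA :: "(nat \<Rightarrow> nat) \<Rightarrow> nat \<Rightarrow> arc" where "bluA p i = (False, p i, i)"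
definition nxtA :: "nat \<Rightarrow> (nat \<Rightarrow> nat) \<Rightarrow> (nat \<Rightarrow> nat) \<Rightarrow> arc \<Rightarrow> arc" where
  "nxtA m p1 p2 e = (if e \<in> arcs m p1 p2 then
     (if arc_col e then bluA p2 (inv p2 (arc_head e)) else redA p1 (arc_head e)) else e)"
definition sgm :: "(nat \<Rightarrow> nat) \<Rightarrow> (nat \<Rightarrow> nat) \<Rightarrow> nat \<Rightarrow> nat" where
  "sgm p1 p2 = inv p2 \<circ> p1"

lemma sgm_apply: "sgm p1 p2 i = inv p2 (p1 i)" by (simp add: sgm_def)

definition rhoA :: "arc \<Rightarrow> nat" where
  "rhoA e = (if arc_col e then arc_tail e else arc_head e)"

lemma perm_supp_facts:
  assumes "f permutes U" "i \<in> U" "f i \<noteq> i"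
  shows "f i \<in> U" "f (f i) \<noteq> f i" "inv f i \<in> U" "f (inv f i) = i" "inv f i \<noteq> i"
proof -
  show "f i \<in> U" using assms by (simp add: permutes_in_image)
  show "f (f i) \<noteq> f i" using permutes_inj[OF assms(1)] assms(3) by (metis injD)
  show "inv f i \<in> U" using permutes_inv[OF assms(1)] assms(2) by (simp add: permutes_in_image)
  show fi: "f (inv f i) = i" by (rule permutes_inverses(1)[OF assms(1)])
  show "inv f i \<noteq> i" using fi assms(3) by metis
qed

context
  fixes m :: nat and p1 p2 :: "nat \<Rightarrow> nat"
  assumes A1: "p1 permutes {1..m}" and A2: "p2 permutes {1..m}"
    and A3: "\<forall>i \<in> {1..m}. (p1 i = i) \<longleftrightarrow> (p2 i = i)"
begin

abbreviation "S \<equiv> Sset m p1"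
abbreviation "E \<equiv> arcs m p1 p2"
abbreviation "nx \<equiv> nxtA m p1 p2"
abbreviation "sg \<equiv> sgm p1 p2"

lemma S2: "Sset m p2 = S" unfolding Sset_def using A3 by auto

lemma S_sub: "S \<subseteq> {1..m}" unfolding Sset_def by auto

lemma finS: "finite S" using S_sub finite_subset by blast

lemma S_p1: "i \<in> S \<Longrightarrow> p1 i \<in> S"
  unfolding Sset_def using perm_supp_facts[OF A1] by auto

lemma S_p2: "i \<in> S \<Longrightarrow> p2 i \<in> S"
  using perm_supp_facts[OF A2] S2 unfolding Sset_def by (metis (mono_tags, lifting) mem_Collect_eq)

lemma S_ip2: "i \<in> S \<Longrightarrow> inv p2 i \<in> S"
  using perm_supp_facts[OF A2] S2 unfolding Sset_def by (metis (mono_tags, lifting) mem_Collect_eq)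

lemma S_sg: "i \<in> S \<Longrightarrow> sg i \<in> S" using S_p1 S_ip2 by (simp add: sgm_apply)

lemma E_eq: "E = redA p1 ` S \<union> bluA p2 ` S"
proof -
  have "red_arcs m p1 = redA p1 ` S" unfolding red_arcs_def redA_def Sset_def by auto
  moreover have "blue_arcs m p2 = bluA p2 ` Sset m p2" unfolding blue_arcs_def bluA_def Sset_def by auto
  ultimately show ?thesis unfolding arcs_def using S2 by simp
qed

lemma finE: "finite E" unfolding E_eq using finS by simp

lemma E_cases:
  assumes "e \<in> E"
  obtains i where "i \<in> S" "e = redA p1 i" | j where "j \<in> S" "e = bluA p2 j"
  using assms unfolding E_eq by auto

lemma red_in: "i \<in> S \<Longrightarrow> redA p1 i \<in> E" unfolding E_eq by auto
lemma blu_in: "i \<in> S \<Longrightarrow> bluA p2 i \<in> E" unfolding E_eq by auto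

lemma nx_red: "i \<in> S \<Longrightarrow> nx (redA p1 i) = bluA p2 (sg i)"
  using red_in unfolding nxtA_def by (simp add: redA_def arc_col_def arc_head_def sgm_apply)

lemma nx_blu: "i \<in> S \<Longrightarrow> nx (bluA p2 i) = redA p1 i"
  using blu_in unfolding nxtA_def by (simp add: bluA_def arc_col_def arc_head_def)

lemma redA_inj: "redA p1 i = redA p1 j \<longleftrightarrow> i = j" by (auto simp: redA_def)
lemma bluA_inj: "bluA p2 i = bluA p2 j \<longleftrightarrow> i = j" by (auto simp: bluA_def)
lemma red_blu: "redA p1 i \<noteq> bluA p2 j" by (simp add: redA_def bluA_def)

lemma N_eq: "N_nodes m p1 p2 = card S"
proof -
  have "{i \<in> {1..m}. \<exists>e \<in> E. arc_tail e = i \<or> arc_head e = i} = S"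
  proof (intro set_eqI iffI)
    fix i assume "i \<in> S"
    moreover have "arc_tail (redA p1 i) = i" by (simp add: redA_def arc_tail_def)
    ultimately show "i \<in> {i \<in> {1..m}. \<exists>e \<in> E. arc_tail e = i \<or> arc_head e = i}"
      using red_in[of i] S_sub by blast
  next
    fix i assume "i \<in> {i \<in> {1..m}. \<exists>e \<in> E. arc_tail e = i \<or> arc_head e = i}"
    then obtain e where e: "e \<in> E" "arc_tail e = i \<or> arc_head e = i" by auto
    from e(1) show "i \<in> S"
    proof (cases rule: E_cases)
      case (1 j) then show ?thesis using e(2) S_p1 by (auto simp: redA_def arc_tail_def arc_head_def)
    next
      case (2 j) then show ?thesis using e(2) S_p2 by (auto simp: bluA_def arc_tail_def arc_head_def)
    qed
  qed
  then show ?thesis unfolding N_nodes_def by simp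
qed

lemma sg_permutes: "sg permutes {1..m}"
  unfolding sgm_def by (rule permutes_compose[OF A1 permutes_inv[OF A2]])

lemma sg_perm: "permutation sg" using sg_permutes permutation_permutes by blast

lemma sg_inj: "sg i = sg j \<Longrightarrow> i = j" using permutes_inj[OF sg_permutes] by (meson injD)

lemma nx_permutes: "nx permutes E"
proof (rule bij_imp_permutes)
  show "nx x = x" if "x \<notin> E" for x using that unfolding nxtA_def by simp
  have img: "nx ` E \<subseteq> E"
  proof
    fix y assume "y \<in> nx ` E"
    then obtain e where e: "e \<in> E" "y = nx e" by auto
    from e(1) show "y \<in> E"
    proof (cases rule: E_cases)
      case (1 i) then show ?thesis using e nx_red S_sg blu_in by simp
    next
      case (2 j) then show ?thesis using e nx_blu red_in by simp
    qed
  qed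
  have inj: "inj_on nx E"
  proof (rule inj_onI)
    fix e e' assume e: "e \<in> E" and e': "e' \<in> E" and eq: "nx e = nx e'"
    from e show "e = e'"
    proof (cases rule: E_cases)
      case (1 i)
      from e' show ?thesis
      proof (cases rule: E_cases)
        case (1 i') then show ?thesis using \<open>i \<in> S\<close> \<open>e = redA p1 i\<close> eq nx_red bluA_inj sg_inj by metis
      next
        case (2 j') then show ?thesis using \<open>i \<in> S\<close> \<open>e = redA p1 i\<close> eq nx_red nx_blu red_blu by metis
      qed
    next
      case (2 j)
      from e' show ?thesis
      proof (cases rule: E_cases)
        case (1 i') then show ?thesis using \<open>j \<in> S\<close> \<open>e = bluA p2 j\<close> eq nx_red nx_blu red_blu by metis
      next
        case (2 j') then show ?thesis using \<open>j \<in> S\<close> \<open>e = bluA p2 j\<close> eq nx_blu redA_inj by metis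
      qed
    qed
  qed
  show "bij_betw nx E E" unfolding bij_betw_def using inj endo_inj_surj[OF finE img inj] by simp
qed

lemma nx_perm: "permutation nx" using nx_permutes finE permutation_permutes by blast

lemma nx_pow_even: "i \<in> S \<Longrightarrow> (nx ^^ (2 * k)) (redA p1 i) = redA p1 ((sg ^^ k) i) \<and> (sg ^^ k) i \<in> S"
proof (induction k)
  case 0 then show ?case by simp
next
  case (Suc k)
  have e: "2 * Suc k = Suc (Suc (2 * k))" by simp
  have IH: "(nx ^^ (2 * k)) (redA p1 i) = redA p1 ((sg ^^ k) i)" "(sg ^^ k) i \<in> S"
    using Suc by auto
  have "(nx ^^ (2 * Suc k)) (redA p1 i) = nx (nx ((nx ^^ (2 * k)) (redA p1 i)))"
    unfolding e by simp
  also have "\<dots> = nx (nx (redA p1 ((sg ^^ k) i)))" using IH(1) by simp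
  also have "\<dots> = nx (bluA p2 (sg ((sg ^^ k) i)))" using nx_red[OF IH(2)] by simp
  also have "\<dots> = redA p1 (sg ((sg ^^ k) i))" using nx_blu[OF S_sg[OF IH(2)]] by simp
  also have "sg ((sg ^^ k) i) = (sg ^^ Suc k) i" by simp
  finally show ?case using S_sg[OF IH(2)] by simp
qed

lemma nx_pow_odd: "i \<in> S \<Longrightarrow> (nx ^^ (2 * k + 1)) (redA p1 i) = bluA p2 (sg ((sg ^^ k) i))"
proof -
  assume i: "i \<in> S"
  have "(nx ^^ (2 * k + 1)) (redA p1 i) = nx ((nx ^^ (2 * k)) (redA p1 i))" by simp
  also have "\<dots> = nx (redA p1 ((sg ^^ k) i))" using nx_pow_even[OF i, of k] by simp
  also have "\<dots> = bluA p2 (sg ((sg ^^ k) i))" using nx_red nx_pow_even[OF i, of k] by blast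
  finally show ?thesis .
qed

lemma orbit_red_iff:
  assumes "i \<in> S" "j \<in> S"
  shows "orbit nx (redA p1 i) = orbit nx (redA p1 j) \<longleftrightarrow> orbit sg i = orbit sg j"
proof
  assume "orbit nx (redA p1 i) = orbit nx (redA p1 j)"
  then have "redA p1 j \<in> orbit nx (redA p1 i)" using perm_orbit_eq[OF nx_perm] by blast
  then obtain n where n: "redA p1 j = (nx ^^ n) (redA p1 i)"
    using orbit_altdef_permutation[OF nx_perm] by blast
  define k where "k = n div 2"
  have "n = 2 * k \<or> n = 2 * k + 1" unfolding k_def by presburger
  then show "orbit sg i = orbit sg j"
  proof
    assume "n = 2 * k"
    then have "j = (sg ^^ k) i" using n nx_pow_even[OF assms(1), of k] redA_inj by simp
    then have "j \<in> orbit sg i" using orbit_altdef_permutation[OF sg_perm] by blast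
    then show ?thesis using perm_orbit_eq[OF sg_perm] by blast
  next
    assume "n = 2 * k + 1"
    then show ?thesis using n nx_pow_odd[OF assms(1), of k] red_blu by simp
  qed
next
  assume "orbit sg i = orbit sg j"
  then have "j \<in> orbit sg i" using perm_orbit_eq[OF sg_perm] by blast
  then obtain k where k: "j = (sg ^^ k) i" using orbit_altdef_permutation[OF sg_perm] by blast
  then have "redA p1 j = (nx ^^ (2 * k)) (redA p1 i)" using nx_pow_even[OF assms(1), of k] by simp
  then have "redA p1 j \<in> orbit nx (redA p1 i)" using orbit_altdef_permutation[OF nx_perm] by blast
  then show "orbit nx (redA p1 i) = orbit nx (redA p1 j)" using perm_orbit_eq[OF nx_perm] by blast
qed

lemma rho_S: "e \<in> E \<Longrightarrow> rhoA e \<in> S"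
  by (erule E_cases) (auto simp: rhoA_def redA_def bluA_def arc_col_def arc_tail_def arc_head_def)

lemma orbit_to_red: "e \<in> E \<Longrightarrow> orbit nx e = orbit nx (redA p1 (rhoA e))"
proof (erule E_cases)
  fix i assume "i \<in> S" "e = redA p1 i"
  then show ?thesis by (simp add: rhoA_def redA_def arc_col_def arc_tail_def)
next
  fix j assume j: "j \<in> S" "e = bluA p2 j"
  have r: "rhoA e = j" using j by (simp add: rhoA_def bluA_def arc_col_def arc_head_def)
  have "nx e = redA p1 j" using j nx_blu by simp
  then have "redA p1 j \<in> orbit nx e" by (metis orbit.base)
  then show ?thesis using r perm_orbit_eq[OF nx_perm] by blast
qed

lemma count_nx: "card (orbit nx ` E) = card (orbit sg ` S)"
proof -
  have rhoE: "rhoA ` E = S"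
  proof (intro set_eqI iffI)
    fix i assume "i \<in> rhoA ` E" then show "i \<in> S" using rho_S by auto
  next
    fix i assume i: "i \<in> S"
    then have "rhoA (redA p1 i) = i" by (simp add: rhoA_def redA_def arc_col_def arc_tail_def)
    then show "i \<in> rhoA ` E" using red_in[OF i] by (metis imageI)
  qed
  have G: "(\<lambda>e. orbit sg (rhoA e)) ` E = orbit sg ` S"
  proof -
    have "(\<lambda>e. orbit sg (rhoA e)) ` E = orbit sg ` (rhoA ` E)" by (simp only: image_image)
    then show ?thesis using rhoE by simp
  qed
  have "card ((\<lambda>e. orbit sg (rhoA e)) ` E) = card (orbit nx ` E)"
  proof (rule card_img_eq')
    show "finite (orbit nx ` E)" using finE by simp
    show "finite ((\<lambda>e. orbit sg (rhoA e)) ` E)" using finE by simp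
    fix x y assume x: "x \<in> E" and y: "y \<in> E"
    show "orbit nx x = orbit nx y \<longleftrightarrow> orbit sg (rhoA x) = orbit sg (rhoA y)"
      using orbit_to_red[OF x] orbit_to_red[OF y] orbit_red_iff[OF rho_S[OF x] rho_S[OF y]] by simp
  qed
  then show ?thesis using G by simp
qed

lemma step_iff:
  assumes "e \<in> E" "e' \<in> E"
  shows "(arc_head e = arc_tail e' \<and> arc_col e \<noteq> arc_col e') \<longleftrightarrow> e' = nx e"
  using assms(1)
proof (cases rule: E_cases)
  case (1 i)
  have nxe: "nx e = bluA p2 (inv p2 (p1 i))" using 1 nx_red by (simp add: sgm_apply)
  from assms(2) show ?thesis
  proof (cases rule: E_cases)
    case (1 i')
    have "\<not> (arc_col e \<noteq> arc_col e')" using \<open>e = redA p1 i\<close> 1 by (simp add: redA_def arc_col_def)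
    moreover have "e' \<noteq> nx e" using nxe 1 red_blu by simp
    ultimately show ?thesis by blast
  next
    case (2 j)
    have "arc_head e = arc_tail e' \<and> arc_col e \<noteq> arc_col e' \<longleftrightarrow> p1 i = p2 j"
      using \<open>e = redA p1 i\<close> \<open>e' = bluA p2 j\<close>
      by (simp add: redA_def bluA_def arc_col_def arc_head_def arc_tail_def)
    also have "\<dots> \<longleftrightarrow> inv p2 (p1 i) = j" using permutes_inv_eq[OF A2, of "p1 i" j] by auto
    also have "\<dots> \<longleftrightarrow> e' = nx e" using nxe \<open>e' = bluA p2 j\<close> bluA_inj by auto
    finally show ?thesis .
  qed
next
  case (2 j)
  have nxe: "nx e = redA p1 j" using 2 nx_blu by simp
  from assms(2) show ?thesis
  proof (cases rule: E_cases)
    case (1 i)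
    have "arc_head e = arc_tail e' \<and> arc_col e \<noteq> arc_col e' \<longleftrightarrow> j = i"
      using \<open>e = bluA p2 j\<close> \<open>e' = redA p1 i\<close>
      by (simp add: redA_def bluA_def arc_col_def arc_head_def arc_tail_def)
    also have "\<dots> \<longleftrightarrow> e' = nx e" using nxe \<open>e' = redA p1 i\<close> redA_inj by auto
    finally show ?thesis .
  next
    case (2 j')
    have "\<not> (arc_col e \<noteq> arc_col e')" using \<open>e = bluA p2 j\<close> 2 by (simp add: bluA_def arc_col_def)
    moreover have "e' \<noteq> nx e" using nxe 2 red_blu by metis
    ultimately show ?thesis by blast
  qed
qed

lemma trail_iff: "alt_closed_trail m p1 p2 c \<longleftrightarrow> ftrail nx E c"
proof -
  have "(\<forall>k < length c. arc_head (c ! k) = arc_tail (c ! ((k + 1) mod length c)) \<and>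
                     arc_col (c ! k) \<noteq> arc_col (c ! ((k + 1) mod length c))) \<longleftrightarrow>
        (\<forall>k < length c. c ! ((k + 1) mod length c) = nx (c ! k))" if sub: "set c \<subseteq> E"
  proof -
    have "(arc_head (c ! k) = arc_tail (c ! ((k + 1) mod length c)) \<and>
                     arc_col (c ! k) \<noteq> arc_col (c ! ((k + 1) mod length c))) \<longleftrightarrow>
          c ! ((k + 1) mod length c) = nx (c ! k)" if k: "k < length c" for k
    proof (rule step_iff)
      show "c ! k \<in> E" using k sub nth_mem by blast
      have "0 < length c" using k by (rule le_less_trans[OF le0])
      then have "(k + 1) mod length c < length c" by simp
      then show "c ! ((k + 1) mod length c) \<in> E" using sub nth_mem by blast
    qed
    then show ?thesis by auto
  qed
  then show ?thesis unfolding alt_closed_trail_def ftrail_def by blast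
qed

lemma A_eq: "A_cycles m p1 p2 = card (orbit sg ` S)"
proof -
  have "{c. alt_closed_trail m p1 p2 c} = {c. ftrail nx E c}" using trail_iff by simp
  then have "A_cycles m p1 p2 = card ((\<lambda>c. {rotate k c | k. True}) ` {c. ftrail nx E c})"
    unfolding A_cycles_def alt_cycles_def by simp
  also have "\<dots> = card (orbit nx ` E)" by (rule rot_count[OF nx_permutes finE])
  finally show ?thesis using count_nx by simp
qed

lemma d_eq: "d_trans m p1 p2 = card {1..m} - card (orbit sg ` {1..m})"
  unfolding d_trans_def sgm_def[symmetric] by (rule least_trans[OF _ sg_permutes]) simp

lemma count_U: "card (orbit sg ` {1..m}) = card (orbit sg ` S) + (card {1..m} - card S)"
proof -
  define U where "U = {1..m :: nat}"
  have finU: "finite U" unfolding U_def by simp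
  have SU: "S \<subseteq> U" unfolding U_def using S_sub .
  have fix1: "sg x = x" if "x \<in> U - S" for x
  proof -
    have "p1 x = x" using that unfolding U_def Sset_def by auto
    moreover have "p2 x = x" using that A3 calculation unfolding U_def by auto
    moreover have "inv p2 x = x" using calculation permutes_inv_eq[OF A2] by metis
    ultimately show ?thesis by (simp add: sgm_apply)
  qed
  have sing: "orbit sg x = {x}" if "x \<in> U - S" for x using fix1[OF that] orbit_eq_singleton_iff by metis
  have img2: "orbit sg ` (U - S) = (\<lambda>x. {x}) ` (U - S)" using sing by auto
  have c2: "card (orbit sg ` (U - S)) = card U - card S"
    unfolding img2 using card_image[of "\<lambda>x. {x}" "U - S"] card_Diff_subset[OF finS SU]
    by (simp add: inj_on_def)
  have disj: "orbit sg ` S \<inter> orbit sg ` (U - S) = {}"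
  proof (rule ccontr)
    assume "orbit sg ` S \<inter> orbit sg ` (U - S) \<noteq> {}"
    then obtain s x where sx: "s \<in> S" "x \<in> U - S" "orbit sg s = orbit sg x" by blast
    then have "s \<in> {x}" using sing[OF sx(2)] permutation_self_in_orbit[OF sg_perm, of s] by simp
    then show False using sx by auto
  qed
  have "orbit sg ` U = orbit sg ` S \<union> orbit sg ` (U - S)" using SU by auto
  then have "card (orbit sg ` U) = card (orbit sg ` S) + card (orbit sg ` (U - S))"
    using card_Un_disjoint[OF _ _ disj] finS finU by simp
  then show ?thesis using c2 unfolding U_def by simp
qed

lemma main_eq: "int (d_trans m p1 p2) = int (N_nodes m p1 p2) - int (A_cycles m p1 p2)"
proof -
  have le: "card (orbit sg ` S) \<le> card S" using finS card_image_le by blast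
  have SU: "card S \<le> card {1..m}" using S_sub card_mono by (metis finite_atLeastAtMost)
  show ?thesis unfolding d_eq N_eq A_eq count_U using le SU by simp
qed

end

theorem proposition4:
  fixes m :: nat and p1 p2 :: "nat \<Rightarrow> nat"
  assumes "p1 permutes {1..m}" and "p2 permutes {1..m}"
    and "\<forall>i \<in> {1..m}. (p1 i = i) \<longleftrightarrow> (p2 i = i)"
  shows "int (d_trans m p1 p2) = int (N_nodes m p1 p2) - int (A_cycles m p1 p2)"
  by (rule main_eq[OF assms])

end
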